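(* Let $G:\mathbb{R}^d\to\mathbb{R}$ be convex and $L$-smooth, let $B\in\mathbb{R}^{s\times d}$ and $b$ in the column space of $B$, and let $u^0\in\mathbb{R}^d$, $R>0$, $\varepsilon>0$. Define $G^{\nu}(u)=G(u)+\frac{\nu}{2}\|u^0-u\|^2$ with $\nu=\varepsilon/R^2$. Suppose there exist $u^*\in\operatorname{Argmin}_{u:Bu=b}G(u)$ and $u^*_\nu=\operatorname{argmin}_{u:Bu=b}G^\nu(u)$, that $\min_u G(u)$ exists, and let $D=G(u^* )-\min_uG(u)$. Assume $\|u^0-u^*\|^2\le R^2$ and set $$\delta=\frac{\varepsilon^2}{32\big(D+\frac\varepsilon2\big)\big(L+\frac{\varepsilon}{R^2}\big)}.$$ If $u\in\mathbb{R}^d$ satisfies $\|u-u^*_\nu\|^2\le\delta$, then $G(u)-G(u^* )\le\varepsilon$ and $\|Bu-b\|^2\le\delta\,\sigma_{\max}^2(B)$.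
   Context: $G$ is $L$-smooth if it is differentiable and $G(u')-G(u)-\langle\nabla G(u),u'-u\rangle\le\frac L2\|u'-u\|^2$ for all $u,u'$. $\sigma_{\max}(B)$ is the largest singular value of $B$. *)

theory Defs
  imports "HOL-Analysis.Analysis"
begin

text \<open>L-smoothness: differentiable everywhere and
  G u' - G u - <grad G u, u' - u> <= L/2 ||u' - u||^2, where the inner product with the
  gradient is the Frechet derivative of G at u applied to u' - u.\<close>
definition L_smooth :: "real \<Rightarrow> ('a::euclidean_space \<Rightarrow> real) \<Rightarrow> bool" where
  "L_smooth L G \<longleftrightarrow> (\<forall>u. G differentiable (at u)) \<and>
     (\<forall>u u'. G u' - G u - frechet_derivative G (at u) (u' - u) \<le> L / 2 * (norm (u' - u))\<^sup>2)"

definition singular_values :: "real^'d^'s \<Rightarrow> real set" where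
  "singular_values B = {\<sigma>. \<sigma> \<ge> 0 \<and>
     (\<exists>v. v \<noteq> 0 \<and> (transpose B ** B) *v v = (\<sigma>\<^sup>2) *\<^sub>R v)}"

definition sigma_max :: "real^'d^'s \<Rightarrow> real" where
  "sigma_max B = Max (singular_values B)"

end

theory Submission
  imports Defs
begin

lemma symB:
  fixes B :: "real^'d^'s"
  shows "((transpose B ** B) *v v) \<bullet> w = (B *v v) \<bullet> (B *v w)"
  by (metis dot_lmul_matrix matrix_vector_mul_assoc transpose_matrix_vector)

lemma sv_finite:
  fixes B :: "real^'d^'s"
  shows "finite (singular_values B)"
proof -
  define M where "M = transpose B ** B"
  define S where "S = singular_values B"
  define ev where "ev \<sigma> = (SOME v. v \<noteq> 0 \<and> M *v v = (\<sigma>\<^sup>2) *\<^sub>R v)" for \<sigma>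
  have evp: "ev \<sigma> \<noteq> 0 \<and> M *v ev \<sigma> = (\<sigma>\<^sup>2) *\<^sub>R ev \<sigma>" "\<sigma> \<ge> 0" if "\<sigma> \<in> S" for \<sigma>
  proof -
    have "\<exists>v. v \<noteq> 0 \<and> M *v v = (\<sigma>\<^sup>2) *\<^sub>R v" using that unfolding S_def singular_values_def M_def by blast
    then show "ev \<sigma> \<noteq> 0 \<and> M *v ev \<sigma> = (\<sigma>\<^sup>2) *\<^sub>R ev \<sigma>" unfolding ev_def by (rule someI_ex)
    show "\<sigma> \<ge> 0" using that unfolding S_def singular_values_def by blast
  qed
  have orth: "ev s1 \<bullet> ev s2 = 0" if "s1 \<in> S" "s2 \<in> S" "s1 \<noteq> s2" for s1 s2
  proof -
    have "s1\<^sup>2 * (ev s1 \<bullet> ev s2) = (M *v ev s1) \<bullet> ev s2" using evp(1)[OF that(1)] by simp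
    also have "\<dots> = (M *v ev s2) \<bullet> ev s1" unfolding M_def symB by (simp add: inner_commute)
    also have "\<dots> = s2\<^sup>2 * (ev s1 \<bullet> ev s2)" using evp(1)[OF that(2)] by (simp add: inner_commute)
    finally have "(s1\<^sup>2 - s2\<^sup>2) * (ev s1 \<bullet> ev s2) = 0" by (simp add: algebra_simps)
    moreover have "s1\<^sup>2 \<noteq> s2\<^sup>2" using evp(2)[OF that(1)] evp(2)[OF that(2)] that(3)
      by (metis power2_eq_imp_eq)
    ultimately show ?thesis by simp
  qed
  have inj: "inj_on ev S"
  proof (rule inj_onI, rule ccontr)
    fix x y assume "x \<in> S" "y \<in> S" "ev x = ev y" "x \<noteq> y"
    then have "ev x \<bullet> ev x = 0" using orth by metis
    then show False using evp(1)[OF \<open>x \<in> S\<close>] by simp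
  qed
  have "pairwise orthogonal (ev ` S)"
    unfolding pairwise_def orthogonal_def using orth by fastforce
  moreover have "0 \<notin> ev ` S" using evp(1) by fastforce
  ultimately have "independent (ev ` S)" by (rule pairwise_orthogonal_independent)
  then have "finite (ev ` S)" by (rule finiteI_independent)
  then show ?thesis using finite_imageD inj S_def by blast
qed

lemma op_bound:
  fixes B :: "real^'d^'s"
  shows "(norm (B *v x))\<^sup>2 \<le> (sigma_max B)\<^sup>2 * (norm x)\<^sup>2"
proof -
  define M where "M = transpose B ** B"
  define q where "q y = (norm (B *v y))\<^sup>2" for y :: "real^'d"
  have "compact (sphere (0::real^'d) 1)" by simp
  moreover have "sphere (0::real^'d) 1 \<noteq> {}" by (simp add: vector_choose_size)
  moreover have "continuous_on (sphere 0 1) q" unfolding q_def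
    by (intro continuous_intros)
  ultimately obtain x0 where x0: "x0 \<in> sphere 0 1" "\<forall>y\<in>sphere 0 1. q y \<le> q x0"
    using continuous_attains_sup by blast
  define lam where "lam = q x0"
  have nx0: "norm x0 = 1" using x0 by simp
  have ix0: "x0 \<bullet> x0 = 1" using nx0 by (metis norm_eq_1)
  have qscale: "q (c *\<^sub>R y) = c\<^sup>2 * q y" for c y
    unfolding q_def by (simp add: matrix_vector_mult_scaleR power_mult_distrib)
  have bound: "q y \<le> lam * (norm y)\<^sup>2" for y
  proof (cases "y = 0")
    case True then show ?thesis by (simp add: q_def)
  next
    case False
    have "q ((1/norm y) *\<^sub>R y) \<le> lam" using x0 False unfolding lam_def by simp
    then have "(1/norm y)\<^sup>2 * q y \<le> lam" by (simp add: qscale)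
    then show ?thesis using False by (simp add: field_simps power2_eq_square)
  qed
  have lam0: "lam \<ge> 0" unfolding lam_def q_def by simp
  have eig: "M *v x0 = lam *\<^sub>R x0"
  proof -
    define z where "z = lam *\<^sub>R x0 - M *v x0"
    have qexp: "q (x0 + t *\<^sub>R w) = q x0 + 2 * t * ((M *v x0) \<bullet> w) + t\<^sup>2 * q w" for t w
      unfolding q_def M_def symB power2_norm_eq_inner
      by (simp add: matrix_vector_right_distrib matrix_vector_mult_scaleR inner_add_left inner_add_right
          algebra_simps power2_eq_square inner_commute)
    have nexp: "(norm (x0 + t *\<^sub>R w))\<^sup>2 = 1 + 2 * t * (x0 \<bullet> w) + t\<^sup>2 * (norm w)\<^sup>2" for t w
      using ix0 unfolding power2_norm_eq_inner
      by (simp add: inner_add_left inner_add_right algebra_simps power2_eq_square inner_commute)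
    define c where "c = z \<bullet> z"
    define a where "a = lam * (norm z)\<^sup>2 - q z"
    have a0: "a \<ge> 0" using bound[of z] unfolding a_def by simp
    have key: "0 \<le> 2 * t * c + t\<^sup>2 * a" for t
    proof -
      have "q (x0 + t *\<^sub>R z) \<le> lam * (norm (x0 + t *\<^sub>R z))\<^sup>2" by (rule bound)
      then show ?thesis unfolding qexp nexp c_def a_def z_def lam_def
        by (simp add: algebra_simps inner_diff_left)
    qed
    have "c = 0"
    proof (rule ccontr)
      assume "c \<noteq> 0"
      then have cp: "c > 0" unfolding c_def by simp
      have "0 \<le> 2 * (-c/(a+1)) * c + (-c/(a+1))\<^sup>2 * a" by (rule key)
      also have "\<dots> = c\<^sup>2 * (-a - 2) / (a+1)\<^sup>2"
      proof -
        have "a + 1 \<noteq> 0" using a0 by linarith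
        then show ?thesis by (simp add: divide_simps power2_eq_square) (simp add: algebra_simps)
      qed
      also have "\<dots> < 0" using a0 cp by (intro divide_neg_pos mult_pos_neg) auto
      finally show False by simp
    qed
    then have "z = 0" unfolding c_def by simp
    then show ?thesis unfolding z_def by simp
  qed
  define s where "s = sqrt lam"
  have "s \<in> singular_values B" unfolding singular_values_def s_def
    using eig nx0 lam0 M_def by (auto intro!: exI[of _ x0])
  then have "s \<le> sigma_max B" unfolding sigma_max_def using sv_finite by (intro Max_ge)
  then have "s\<^sup>2 \<le> (sigma_max B)\<^sup>2" using lam0 s_def by (intro power_mono) auto
  then have "lam \<le> (sigma_max B)\<^sup>2" using lam0 s_def by simp
  then show ?thesis using bound[of x] unfolding q_def by (simp add: mult_right_mono order_trans)
qed
theorem lemmaD2: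
  fixes G :: "real^'d \<Rightarrow> real" and L R \<epsilon> :: real
    and B :: "real^'d^'s" and b :: "real^'s"
    and u0 ustar unu umin u :: "real^'d"
  defines "\<nu> \<equiv> \<epsilon> / R\<^sup>2"
  defines "Gnu \<equiv> (\<lambda>v. G v + \<nu> / 2 * (norm (u0 - v))\<^sup>2)"
  defines "D \<equiv> G ustar - G umin"
  defines "\<delta> \<equiv> \<epsilon>\<^sup>2 / (32 * (D + \<epsilon> / 2) * (L + \<epsilon> / R\<^sup>2))"
  assumes convex: "convex_on UNIV G"
    and smooth: "L_smooth L G"
    and b_col: "b \<in> range (\<lambda>x. B *v x)"
    and R_pos: "R > 0" and eps_pos: "\<epsilon> > 0"
    and ustar_feas: "B *v ustar = b"
    and ustar_min: "\<forall>v. B *v v = b \<longrightarrow> G ustar \<le> G v"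
    and unu_feas: "B *v unu = b"
    and unu_min: "\<forall>v. B *v v = b \<longrightarrow> Gnu unu \<le> Gnu v"
    and umin_min: "\<forall>v. G umin \<le> G v"
    and init: "(norm (u0 - ustar))\<^sup>2 \<le> R\<^sup>2"
    and close: "(norm (u - unu))\<^sup>2 \<le> \<delta>"
  shows "G u - G ustar \<le> \<epsilon> \<and> (norm (B *v u - b))\<^sup>2 \<le> \<delta> * (sigma_max B)\<^sup>2"
proof -
  define K where "K = L + \<epsilon> / R\<^sup>2"
  define A where "A = D + \<epsilon> / 2"
  define h where "h = u - unu"
  have A_ge: "A \<ge> \<epsilon> / 2" unfolding A_def D_def using umin_min by simp
  have A_pos: "A > 0" using A_ge eps_pos by linarith
  have \<delta>_eq: "\<delta> = \<epsilon>\<^sup>2 / (32 * A * K)" unfolding \<delta>_def A_def K_def by simp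
  have h2: "(norm h)\<^sup>2 \<le> \<delta>" using close h_def by simp
  have \<delta>0: "\<delta> \<ge> 0" using h2 by (meson order_trans zero_le_power2)
  have part2: "(norm (B *v u - b))\<^sup>2 \<le> \<delta> * (sigma_max B)\<^sup>2"
  proof -
    have "B *v u - b = B *v h" unfolding h_def using unu_feas by (simp add: matrix_vector_mult_diff_distrib)
    then have "(norm (B *v u - b))\<^sup>2 \<le> (sigma_max B)\<^sup>2 * (norm h)\<^sup>2" using op_bound by metis
    also have "\<dots> \<le> (sigma_max B)\<^sup>2 * \<delta>" using h2 by (simp add: mult_left_mono)
    finally show ?thesis by (simp add: mult.commute)
  qed
  have Gunu: "G unu \<le> G ustar + \<epsilon> / 2"
  proof -
    have "Gnu unu \<le> Gnu ustar" using unu_min ustar_feas by blast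
    then have "G unu \<le> G ustar + \<nu> / 2 * (norm (u0 - ustar))\<^sup>2"
      unfolding Gnu_def by (smt (verit) \<nu>_def eps_pos R_pos divide_nonneg_pos mult_nonneg_nonneg zero_le_power2 zero_less_power)
    also have "\<nu> / 2 * (norm (u0 - ustar))\<^sup>2 \<le> \<nu> / 2 * R\<^sup>2"
      using init eps_pos R_pos unfolding \<nu>_def by (intro mult_left_mono) auto
    also have "\<nu> / 2 * R\<^sup>2 = \<epsilon> / 2" unfolding \<nu>_def using R_pos by simp
    finally show ?thesis by simp
  qed
  have part1: "G u - G ustar \<le> \<epsilon>"
  proof (cases "K > 0")
    case False
    then have "\<delta> \<le> 0" unfolding \<delta>_eq using A_pos
      by (simp add: divide_nonneg_nonpos mult_nonneg_nonpos)
    then have "(norm h)\<^sup>2 \<le> 0" using h2 by linarith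
    then have "h = 0" by simp
    then show ?thesis using Gunu eps_pos h_def by simp
  next
    case True
    define fd where "fd = frechet_derivative G (at unu)"
    have "G differentiable (at unu)" using smooth unfolding L_smooth_def by blast
    then have "(G has_derivative fd) (at unu)" unfolding fd_def frechet_derivative_works .
    then have lin: "linear fd" using has_derivative_linear by blast
    have sm: "G u' - G unu - fd (u' - unu) \<le> L / 2 * (norm (u' - unu))\<^sup>2" for u'
      using smooth unfolding L_smooth_def fd_def by blast
    define t where "t = 8 * A / \<epsilon>"
    have t_pos: "t > 0" unfolding t_def using A_pos eps_pos by simp
    have Lt: "L * t * (norm h)\<^sup>2 / 2 \<le> \<epsilon> / 8"
    proof (cases "L > 0")
      case False
      then have "L * t * (norm h)\<^sup>2 \<le> 0" using t_pos
        by (simp add: mult_nonpos_nonneg)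
      then show ?thesis using t_pos eps_pos by simp
    next
      case Lp: True
      have "L * t * (norm h)\<^sup>2 / 2 \<le> L * t * \<delta> / 2" using h2 Lp t_pos by simp
      also have "\<dots> = (L / K) * (\<epsilon> / 8)" unfolding \<delta>_eq t_def using A_pos eps_pos True
        by (simp add: field_simps power2_eq_square)
      also have "\<dots> \<le> \<epsilon> / 8" using True Lp eps_pos K_def R_pos
        by (intro mult_left_le_one_le) auto
      finally show ?thesis .
    qed
    have fdh: "fd h \<le> \<epsilon> / 4"
    proof -
      have "G (unu - t *\<^sub>R h) - G unu - fd (- (t *\<^sub>R h)) \<le> L / 2 * (norm (- (t *\<^sub>R h)))\<^sup>2"
        using sm[of "unu - t *\<^sub>R h"] by simp
      moreover have "fd (- (t *\<^sub>R h)) = - t * fd h" using lin by (simp add: linear_neg linear_cmul)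
      moreover have "(norm (- (t *\<^sub>R h)))\<^sup>2 = t\<^sup>2 * (norm h)\<^sup>2" using t_pos
        by (simp add: power_mult_distrib)
      moreover have "G umin \<le> G (unu - t *\<^sub>R h)" using umin_min by blast
      ultimately have "t * fd h \<le> G unu - G umin + L / 2 * (t\<^sup>2 * (norm h)\<^sup>2)" by simp
      also have "\<dots> \<le> A + t * (L * t * (norm h)\<^sup>2 / 2)" using Gunu unfolding A_def D_def
        by (simp add: power2_eq_square algebra_simps)
      also have "\<dots> \<le> A + t * (\<epsilon> / 8)" using Lt t_pos by (simp add: mult_left_mono)
      also have "\<dots> = t * (\<epsilon> / 4)" using eps_pos unfolding t_def by (simp add: field_simps)
      finally show ?thesis using t_pos by simp
    qed
    have Lh: "L / 2 * (norm h)\<^sup>2 \<le> \<epsilon> / 4"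
    proof (cases "L > 0")
      case False
      then have "L * (norm h)\<^sup>2 \<le> 0" by (simp add: mult_nonpos_nonneg)
      then show ?thesis using eps_pos by simp
    next
      case Lp: True
      have "L / 2 * (norm h)\<^sup>2 \<le> L / 2 * \<delta>" using h2 Lp by simp
      also have "\<dots> = (L / K) * (\<epsilon>\<^sup>2 / (64 * A))" unfolding \<delta>_eq using A_pos True
        by (simp add: field_simps)
      also have "\<dots> \<le> \<epsilon>\<^sup>2 / (64 * A)" using True Lp eps_pos K_def R_pos A_pos
        by (intro mult_left_le_one_le) auto
      also have "\<dots> \<le> \<epsilon>\<^sup>2 / (32 * \<epsilon>)" using A_ge eps_pos
        by (intro divide_left_mono) auto
      also have "\<dots> \<le> \<epsilon> / 4" using eps_pos by (simp add: power2_eq_square)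
      finally show ?thesis .
    qed
    have "G u - G unu - fd h \<le> L / 2 * (norm h)\<^sup>2" using sm[of u] h_def by simp
    then show ?thesis using fdh Lh Gunu by linarith
  qed
  show ?thesis using part1 part2 by blast
qed

end
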